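(* For any positive definite $d\times d$ matrix valued measure $\boldsymbol\mu$ on the unit circle $\mathbb T$ and any $d$-dimensional (row) vector valued Laurent polynomial $\mathbf f$, \[F(z,\mathbf f\,d\boldsymbol\mu\,\mathbf f^\dagger)\in L^2_{d\theta/2\pi}(\mathbb T)\iff \mathbf f(z)\,\mathbf F(z,d\boldsymbol\mu)\,\mathbf f(z)^\dagger\in L^2_{d\theta/2\pi}(\mathbb T).\]
   Context: A $d$-dimensional vector valued Laurent polynomial is $\mathbf f(z)=\sum_{k=p}^q\mathbf a_kz^k$ with $\mathbf a_k\in\mathbb C^d$ (row vectors), $p\le q$ integers; $\mathbf f(z)^\dagger$ denotes the conjugate transpose (including conjugation of $z$), so on $\mathbb T$, $\mathbf f\,d\boldsymbol\mu\,\mathbf f^\dagger$ is a scalar positive finite measure. For a (scalar or matrix valued) finite positive measure $\nu$ on $\mathbb T$, its Carathéodory function is $F(z,d\nu)=\int_{\mathbb T}\frac{t+z}{t-z}\,d\nu(t)$ for $|z|<1$ (matrix valued when $\nu$ is, written $\mathbf F$); it is identified on $\mathbb T$ with its radial limits $\lim_{r\uparrow1}F(re^{i\theta},d\nu)$, which exist for Lebesgue a.e. $\theta$, and $L^2_{d\theta/2\pi}(\mathbb T)$-membership refers to these boundary values. *)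

theory Defs
  imports "HOL-Analysis.Analysis"
begin

definition lpoly :: "(int \<Rightarrow> complex^'d::finite) \<Rightarrow> int \<Rightarrow> int \<Rightarrow> complex \<Rightarrow> complex^'d" where
  "lpoly a p q z = (\<Sum>k\<in>{p..q}. (z powi k) *s a k)"

definition qf :: "complex^'d::finite^'d \<Rightarrow> complex^'d \<Rightarrow> complex" where
  "qf A v = (\<Sum>i\<in>UNIV. \<Sum>j\<in>UNIV. v $ i * A $ i $ j * cnj (v $ j))"

definition psd_matrix :: "complex^'d::finite^'d \<Rightarrow> bool" where
  "psd_matrix A \<longleftrightarrow> (\<forall>v. Im (qf A v) = 0 \<and> Re (qf A v) \<ge> 0)"

text \<open>A d x d matrix valued (positive) measure on T, given as d mu = W dM, with M a finite
  positive measure on T and W a measurable, M-integrable, positive semidefinite matrix density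
  (every matrix measure has this form, e.g. with M its trace measure).\<close>
definition matrix_measure :: "complex measure \<Rightarrow> (complex \<Rightarrow> complex^'d::finite^'d) \<Rightarrow> bool" where
  "matrix_measure M W \<longleftrightarrow>
     finite_measure M \<and> space M = sphere 0 1 \<and> sets M = sets (restrict_space borel (sphere 0 1)) \<and>
     (\<forall>i j. integrable M (\<lambda>t. W t $ i $ j)) \<and> (\<forall>t\<in>sphere 0 1. psd_matrix (W t))"

definition pd_matrix_measure :: "complex measure \<Rightarrow> (complex \<Rightarrow> complex^'d::finite^'d) \<Rightarrow> bool" where
  "pd_matrix_measure M W \<longleftrightarrow> matrix_measure M W \<and>
     (\<forall>(b :: int \<Rightarrow> complex^'d) r s. r \<le> s \<and> (\<exists>k\<in>{r..s}. b k \<noteq> 0) \<longrightarrow>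
        (LINT t|M. Re (qf (W t) (lpoly b r s t))) > 0)"

definition cara :: "complex measure \<Rightarrow> complex \<Rightarrow> complex" where
  "cara \<nu> z = (LINT t|\<nu>. (t + z) / (t - z))"

definition cara_mat :: "complex measure \<Rightarrow> (complex \<Rightarrow> complex^'d::finite^'d) \<Rightarrow> complex \<Rightarrow> complex^'d^'d" where
  "cara_mat M W z = (\<chi> i j. LINT t|M. (t + z) / (t - z) * W t $ i $ j)"

definition L2_T :: "(complex \<Rightarrow> complex) \<Rightarrow> bool" where
  "L2_T G \<longleftrightarrow> (\<exists>h :: real \<Rightarrow> complex. h \<in> borel_measurable lborel \<and>
     (AE \<theta> in lborel. \<theta> \<in> {0..2*pi} \<longrightarrow> ((\<lambda>r. G (complex_of_real r * cis \<theta>)) \<longlongrightarrow> h \<theta>) (at_left 1)) \<and>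
     integrable (lebesgue_on {0..2*pi}) (\<lambda>\<theta>. (cmod (h \<theta>))\<^sup>2))"

end

theory Submission
  imports Defs
begin



lemma meas_powi[measurable (raw)]: "f \<in> borel_measurable M \<Longrightarrow> (\<lambda>x. (f x::complex) powi k) \<in> borel_measurable M"
proof (cases "0 \<le> k")
  case True assume f[measurable]: "f \<in> borel_measurable M"
  show ?thesis using True by (simp add: power_int_def)
next
  case False assume f[measurable]: "f \<in> borel_measurable M"
  show ?thesis using False by (simp add: power_int_def)
qed

lemma meas_cnj[measurable (raw)]: "f \<in> borel_measurable M \<Longrightarrow> (\<lambda>x. cnj (f x)) \<in> borel_measurable M"
  by (rule measurable_compose[of f M borel]) (auto intro!: borel_measurable_continuous_onI continuous_intros)

lemma meas_cis[measurable (raw)]: "f \<in> borel_measurable M \<Longrightarrow> (\<lambda>x. cis (f x)) \<in> borel_measurable M"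
  by (rule measurable_compose[of f M borel]) (auto intro!: borel_measurable_continuous_onI continuous_intros)

lemma meas_ident_M:
  assumes "sets M = sets (restrict_space borel (sphere (0::complex) 1))"
  shows "(\<lambda>t. t) \<in> borel_measurable M"
proof -
  have "(\<lambda>t. t) \<in> borel_measurable (restrict_space borel (sphere (0::complex) 1))"
    by (rule measurable_restrict_space1) simp
  then show ?thesis by (subst measurable_cong_sets[OF assms refl])
qed

lemma lpoly_comp: "lpoly a p q z $ i = (\<Sum>k\<in>{p..q}. z powi k * a k $ i)"
  unfolding lpoly_def by (simp add: sum_component)

lemma meas_lpoly[measurable (raw)]: "f \<in> borel_measurable M \<Longrightarrow> (\<lambda>x. lpoly a p q (f x) $ i) \<in> borel_measurable M"
proof -
  assume [measurable]: "f \<in> borel_measurable M"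
  show ?thesis unfolding lpoly_comp by (rule borel_measurable_sum) measurable
qed

lemma "(\<lambda>(\<theta>::real, t::complex). (t + of_real r * cis \<theta>) / (t - of_real r*cis \<theta>) * lpoly a p q (of_real r * cis \<theta>) $ i * cnj (lpoly a p q t $ j)) \<in> borel_measurable (lborel \<Otimes>\<^sub>M borel)"
  by measurable

lemma sq_sum_le: "((x::real) + y)\<^sup>2 \<le> 2*x\<^sup>2 + 2*y\<^sup>2"
  by (smt (verit) power2_sum zero_le_power2[of "x-y"] power2_diff)

lemma L2_transfer:
  fixes G1 G2 D :: "complex \<Rightarrow> complex" and E :: "real \<Rightarrow> complex"
  assumes rep: "\<And>z. norm z < 1 \<Longrightarrow> G2 z = G1 z + D z"
   and lim: "\<And>\<theta>. ((\<lambda>r. D (complex_of_real r * cis \<theta>)) \<longlongrightarrow> E \<theta>) (at_left 1)"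
   and Em: "E \<in> borel_measurable lborel" and Eb: "\<And>\<theta>. norm (E \<theta>) \<le> B"
   and L: "L2_T G1"
  shows "L2_T G2"
proof -
  obtain h where hm: "h \<in> borel_measurable lborel"
    and hae: "AE \<theta> in lborel. \<theta> \<in> {0..2*pi} \<longrightarrow> ((\<lambda>r. G1 (complex_of_real r * cis \<theta>)) \<longlongrightarrow> h \<theta>) (at_left 1)"
    and hi: "integrable (lebesgue_on {0..2*pi}) (\<lambda>\<theta>. (cmod (h \<theta>))\<^sup>2)"
    using L unfolding L2_T_def by blast
  have B0: "0 \<le> B" using Eb[of 0] norm_ge_zero order_trans by blast
  show ?thesis unfolding L2_T_def
  proof (intro exI[of _ "\<lambda>\<theta>. h \<theta> + E \<theta>"] conjI)
    show "(\<lambda>\<theta>. h \<theta> + E \<theta>) \<in> borel_measurable lborel" using hm Em by measurable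
    show "AE \<theta> in lborel. \<theta> \<in> {0..2*pi} \<longrightarrow> ((\<lambda>r. G2 (complex_of_real r * cis \<theta>)) \<longlongrightarrow> h \<theta> + E \<theta>) (at_left 1)"
      using hae
    proof (rule AE_mp, intro AE_I2 impI)
      fix \<theta> assume 1: "\<theta> \<in> {0..2*pi} \<longrightarrow> ((\<lambda>r. G1 (complex_of_real r * cis \<theta>)) \<longlongrightarrow> h \<theta>) (at_left 1)"
        and 2: "\<theta> \<in> {0..2*pi}"
      have ev: "eventually (\<lambda>r. G1 (complex_of_real r * cis \<theta>) + D (complex_of_real r * cis \<theta>)
             = G2 (complex_of_real r * cis \<theta>)) (at_left (1::real))"
        using eventually_at_left_real[OF zero_less_one]
      proof (rule eventually_mono)
        fix r :: real assume "r \<in> {0<..<1}"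
        then have "norm (complex_of_real r * cis \<theta>) < 1" by (simp add: norm_mult)
        then show "G1 (complex_of_real r * cis \<theta>) + D (complex_of_real r * cis \<theta>)
             = G2 (complex_of_real r * cis \<theta>)" by (simp add: rep)
      qed
      show "((\<lambda>r. G2 (complex_of_real r * cis \<theta>)) \<longlongrightarrow> h \<theta> + E \<theta>) (at_left 1)"
        using tendsto_add[OF 1[rule_format, OF 2] lim] ev by (rule Lim_transform_eventually)
    qed
    have fm: "finite_measure (lebesgue_on {0..2*pi})"
      by (rule finite_measure_lebesgue_on) simp
    show "integrable (lebesgue_on {0..2*pi}) (\<lambda>\<theta>. (cmod (h \<theta> + E \<theta>))\<^sup>2)"
    proof (rule Bochner_Integration.integrable_bound[where f="\<lambda>\<theta>. 2*(cmod (h \<theta>))\<^sup>2 + 2*B\<^sup>2"])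
      show "integrable (lebesgue_on {0..2*pi}) (\<lambda>\<theta>. 2*(cmod (h \<theta>))\<^sup>2 + 2*B\<^sup>2)"
        using hi finite_measure.integrable_const[OF fm] by auto
      have "(\<lambda>\<theta>. h \<theta> + E \<theta>) \<in> borel_measurable (lebesgue_on {0..2*pi})"
        using hm Em by (simp add: measurable_completion measurable_restrict_space1)
      then show "(\<lambda>\<theta>. (cmod (h \<theta> + E \<theta>))\<^sup>2) \<in> borel_measurable (lebesgue_on {0..2*pi})"
        by measurable
      show "AE \<theta> in lebesgue_on {0..2*pi}. norm ((cmod (h \<theta> + E \<theta>))\<^sup>2) \<le> norm (2*(cmod (h \<theta>))\<^sup>2 + 2*B\<^sup>2)"
      proof (intro AE_I2)
        fix \<theta>
        have "(cmod (h \<theta> + E \<theta>))\<^sup>2 \<le> (cmod (h \<theta>) + cmod (E \<theta>))\<^sup>2"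
          by (intro power_mono norm_triangle_ineq) simp
        also have "\<dots> \<le> 2*(cmod (h \<theta>))\<^sup>2 + 2*(cmod (E \<theta>))\<^sup>2" by (rule sq_sum_le)
        also have "\<dots> \<le> 2*(cmod (h \<theta>))\<^sup>2 + 2*B\<^sup>2"
          using power_mono[OF Eb[of \<theta>] norm_ge_zero] by simp
        finally show "norm ((cmod (h \<theta> + E \<theta>))\<^sup>2) \<le> norm (2*(cmod (h \<theta>))\<^sup>2 + 2*B\<^sup>2)" by simp
      qed
    qed
  qed
qed

lemma powi_norm_bound:
  fixes z :: complex assumes "1/2 \<le> norm z" "norm z \<le> 1"
  shows "norm (z powi k) \<le> 2^nat\<bar>k\<bar>"
proof (cases "0 \<le> k")
  case True
  have "norm z ^ nat k \<le> 1" using assms by (simp add: power_le_one)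
  also have "(1::real) \<le> 2^nat\<bar>k\<bar>" by simp
  finally show ?thesis using True by (simp add: power_int_def norm_power)
next
  case False
  have z0: "z \<noteq> 0" using assms by auto
  have "inverse (norm z) \<le> inverse (1/2)" using assms by (intro le_imp_inverse_le) auto
  then have "norm (inverse z) \<le> 2" by (simp add: norm_inverse)
  then have "norm (inverse z) ^ nat (-k) \<le> 2 ^ nat (-k)" by (intro power_mono) auto
  then show ?thesis using False by (simp add: power_int_def norm_power)
qed

lemma powi_lip:
  fixes z t :: complex assumes t: "norm t = 1" and z: "1/2 \<le> norm z" "norm z \<le> 1"
  shows "norm (z powi k - t powi k) \<le> of_nat (nat\<bar>k\<bar>) * 2^nat\<bar>k\<bar> * norm (z - t)"
proof (cases "0 \<le> k")
  case True
  have "norm (z ^ nat k - t ^ nat k) \<le> of_nat (nat k) * norm (z - t)"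
    using z t by (intro norm_power_diff) auto
  also have "\<dots> \<le> of_nat (nat\<bar>k\<bar>) * 2^nat\<bar>k\<bar> * norm (z - t)"
  proof (intro mult_right_mono)
    have "(1::real) \<le> 2^nat\<bar>k\<bar>" by simp
    from mult_left_mono[OF this, of "of_nat (nat\<bar>k\<bar>)"]
    show "real (nat k) \<le> of_nat (nat\<bar>k\<bar>) * 2^nat\<bar>k\<bar>" using True by simp
  qed simp
  finally show ?thesis using True by (simp add: power_int_def)
next
  case False
  define n where "n = nat (-k)"
  have z0: "z \<noteq> 0" using z by auto
  have t0: "t \<noteq> 0" using t by auto
  define x where "x = inverse z / 2"
  define y where "y = inverse t / 2"
  have nx: "norm x \<le> 1" using z z0 by (simp add: x_def norm_inverse norm_divide field_simps)
  have ny: "norm y \<le> 1" using t by (simp add: y_def norm_inverse norm_divide)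
  have eq: "inverse z ^ n - inverse t ^ n = 2^n * (x^n - y^n)"
    by (simp add: x_def y_def power_divide field_simps)
  have "norm (x - y) = norm (t - z) / (2 * norm z * norm t)"
    using z0 t0 by (simp add: x_def y_def field_simps norm_divide norm_mult)
  also have "\<dots> \<le> norm (z - t)"
  proof -
    have "norm (t - z) / (2 * norm z * norm t) \<le> norm (t - z) / 1"
      using z t by (intro divide_left_mono) auto
    then show ?thesis by (simp add: norm_minus_commute)
  qed
  finally have nxy: "norm (x - y) \<le> norm (z - t)" .
  have "norm (inverse z ^ n - inverse t ^ n) = 2^n * norm (x^n - y^n)"
    by (simp add: eq norm_mult norm_power)
  also have "\<dots> \<le> 2^n * (of_nat n * norm (x - y))"
    using norm_power_diff[OF nx ny, of n] by (intro mult_left_mono) auto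
  also have "\<dots> \<le> 2^n * (of_nat n * norm (z - t))"
    using nxy by (intro mult_left_mono) auto
  finally show ?thesis using False by (simp add: power_int_def n_def mult_ac)
qed

definition Cst :: "(int \<Rightarrow> complex^'d::finite) \<Rightarrow> int \<Rightarrow> int \<Rightarrow> real" where
  "Cst a p q = (\<Sum>i\<in>UNIV. \<Sum>k\<in>{p..q}. norm (a k $ i) * ((of_nat (nat\<bar>k\<bar>)+1) * 2^nat\<bar>k\<bar>))"

lemma Cst_ge: "(\<Sum>k\<in>{p..q}. norm (a k $ i) * ((of_nat (nat\<bar>k\<bar>)+1) * 2^nat\<bar>k\<bar>)) \<le> Cst a p q"
  unfolding Cst_def by (rule member_le_sum[where f="\<lambda>i. \<Sum>k\<in>{p..q}. norm (a k $ i) * ((of_nat (nat\<bar>k\<bar>)+1) * 2^nat\<bar>k\<bar>)"])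
    (auto intro!: sum_nonneg)

lemma lpoly_bound:
  fixes z :: complex assumes z: "1/2 \<le> norm z" "norm z \<le> 1"
  shows "norm (lpoly a p q z $ i) \<le> Cst a p q"
proof -
  have "norm (lpoly a p q z $ i) \<le> (\<Sum>k\<in>{p..q}. norm (z powi k * a k $ i))"
    unfolding lpoly_comp by (rule norm_sum)
  also have "\<dots> \<le> (\<Sum>k\<in>{p..q}. norm (a k $ i) * ((of_nat (nat\<bar>k\<bar>)+1) * 2^nat\<bar>k\<bar>))"
  proof (intro sum_mono)
    fix k
    have "norm (z powi k) \<le> (of_nat (nat\<bar>k\<bar>)+1) * 2^nat\<bar>k\<bar>"
      using powi_norm_bound[OF z, of k] by (smt (verit) mult_le_cancel_right1 of_nat_0_le_iff zero_le_power)
    then have "norm (a k $ i) * norm (z powi k) \<le> norm (a k $ i) * ((of_nat (nat\<bar>k\<bar>)+1) * 2^nat\<bar>k\<bar>)"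
      by (rule mult_left_mono) simp
    then show "norm (z powi k * a k $ i) \<le> norm (a k $ i) * ((of_nat (nat\<bar>k\<bar>)+1) * 2^nat\<bar>k\<bar>)"
      by (simp add: norm_mult mult.commute)
  qed
  also have "\<dots> \<le> Cst a p q" by (rule Cst_ge)
  finally show ?thesis .
qed

lemma lpoly_lip:
  fixes z t :: complex assumes t: "norm t = 1" and z: "1/2 \<le> norm z" "norm z \<le> 1"
  shows "norm (lpoly a p q z $ i - lpoly a p q t $ i) \<le> Cst a p q * norm (z - t)"
proof -
  have "lpoly a p q z $ i - lpoly a p q t $ i = (\<Sum>k\<in>{p..q}. (z powi k - t powi k) * a k $ i)"
    unfolding lpoly_comp by (simp add: sum_subtractf algebra_simps)
  then have "norm (lpoly a p q z $ i - lpoly a p q t $ i) \<le> (\<Sum>k\<in>{p..q}. norm ((z powi k - t powi k) * a k $ i))"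
    by (simp add: norm_sum)
  also have "\<dots> \<le> (\<Sum>k\<in>{p..q}. norm (a k $ i) * ((of_nat (nat\<bar>k\<bar>)+1) * 2^nat\<bar>k\<bar>) * norm (z - t))"
  proof (intro sum_mono)
    fix k
    have "norm (z powi k - t powi k) \<le> of_nat (nat\<bar>k\<bar>) * 2^nat\<bar>k\<bar> * norm (z - t)"
      by (rule powi_lip[OF t z])
    also have "\<dots> \<le> (of_nat (nat\<bar>k\<bar>)+1) * 2^nat\<bar>k\<bar> * norm (z - t)"
      by (intro mult_right_mono) auto
    finally have "norm (a k $ i) * norm (z powi k - t powi k) \<le> norm (a k $ i) * ((of_nat (nat\<bar>k\<bar>)+1) * 2^nat\<bar>k\<bar> * norm (z - t))"
      by (rule mult_left_mono) simp
    then show "norm ((z powi k - t powi k) * a k $ i) \<le> norm (a k $ i) * ((of_nat (nat\<bar>k\<bar>)+1) * 2^nat\<bar>k\<bar>) * norm (z - t)"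
      by (simp add: norm_mult mult_ac)
  qed
  also have "\<dots> = (\<Sum>k\<in>{p..q}. norm (a k $ i) * ((of_nat (nat\<bar>k\<bar>)+1) * 2^nat\<bar>k\<bar>)) * norm (z - t)"
    by (simp add: sum_distrib_right)
  also have "\<dots> \<le> Cst a p q * norm (z - t)"
    by (intro mult_right_mono Cst_ge) auto
  finally show ?thesis .
qed

lemma qf_term_eq: "(u::complex) * a * cnj w - v * a * cnj y = a * ((u - v) * cnj w + v * cnj (w - y))"
  by (simp add: algebra_simps)

lemma qf_diff_bound:
  fixes A :: "complex^'d::finite^'d"
  assumes u: "\<And>i. norm (u$i) \<le> C" and v: "\<And>i. norm (v$i) \<le> C"
    and uv: "\<And>i. norm (u$i - v$i) \<le> C*\<delta>"
  shows "norm (qf A u - qf A v) \<le> 2*C*C*\<delta>*(\<Sum>i\<in>UNIV. \<Sum>j\<in>UNIV. norm (A$i$j))"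
proof -
  obtain i0 :: 'd where True by simp
  have C0: "0 \<le> C" using u[of i0] norm_ge_zero order_trans by blast
  have Cd: "0 \<le> C*\<delta>" using uv[of i0] norm_ge_zero order_trans by blast
  have "qf A u - qf A v = (\<Sum>i\<in>UNIV. \<Sum>j\<in>UNIV. u$i * A$i$j * cnj (u$j) - v$i * A$i$j * cnj (v$j))"
    unfolding qf_def by (simp only: sum_subtractf)
  also have "\<dots> = (\<Sum>i\<in>UNIV. \<Sum>j\<in>UNIV. A$i$j * ((u$i - v$i) * cnj (u$j) + v$i * cnj (u$j - v$j)))"
    by (simp only: qf_term_eq)
  finally have eq: "qf A u - qf A v = (\<Sum>i\<in>UNIV. \<Sum>j\<in>UNIV. A$i$j * ((u$i - v$i) * cnj (u$j) + v$i * cnj (u$j - v$j)))" .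
  have tb: "norm (A$i$j * ((u$i - v$i) * cnj (u$j) + v$i * cnj (u$j - v$j))) \<le> norm (A$i$j) * (2*C*C*\<delta>)" for i j
  proof -
    have 1: "norm ((u$i - v$i) * cnj (u$j)) \<le> (C*\<delta>) * C"
      unfolding norm_mult complex_mod_cnj by (rule mult_mono[OF uv u Cd norm_ge_zero])
    have 2: "norm (v$i * cnj (u$j - v$j)) \<le> C * (C*\<delta>)"
      unfolding norm_mult complex_mod_cnj by (rule mult_mono[OF v uv C0 norm_ge_zero])
    have "norm ((u$i - v$i) * cnj (u$j) + v$i * cnj (u$j - v$j)) \<le> norm ((u$i - v$i) * cnj (u$j)) + norm (v$i * cnj (u$j - v$j))"
      by (rule norm_triangle_ineq)
    also have "\<dots> \<le> 2*C*C*\<delta>" using 1 2 by (simp add: algebra_simps)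
    finally have "norm ((u$i - v$i) * cnj (u$j) + v$i * cnj (u$j - v$j)) \<le> 2*C*C*\<delta>" .
    then show ?thesis unfolding norm_mult by (rule mult_left_mono) simp
  qed
  have "norm (qf A u - qf A v) \<le> (\<Sum>i\<in>UNIV. norm (\<Sum>j\<in>UNIV. A$i$j * ((u$i - v$i) * cnj (u$j) + v$i * cnj (u$j - v$j))))"
    unfolding eq by (rule norm_sum)
  also have "\<dots> \<le> (\<Sum>i\<in>UNIV. \<Sum>j\<in>UNIV. norm (A$i$j) * (2*C*C*\<delta>))"
    by (intro sum_mono order_trans[OF norm_sum] tb)
  also have "\<dots> = 2*C*C*\<delta>*(\<Sum>i\<in>UNIV. \<Sum>j\<in>UNIV. norm (A$i$j))"
    by (simp add: sum_distrib_left sum_distrib_right mult_ac)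
  finally show ?thesis .
qed

definition Kf :: "(complex \<Rightarrow> complex^'d::finite^'d) \<Rightarrow> (int \<Rightarrow> complex^'d) \<Rightarrow> int \<Rightarrow> int \<Rightarrow> complex \<Rightarrow> complex \<Rightarrow> complex" where
  "Kf W a p q t z = (t+z)/(t-z) * (qf (W t) (lpoly a p q z) - qf (W t) (lpoly a p q t))"


lemma Kf_bound:
  fixes z t :: complex assumes t: "norm t = 1" and z: "1/2 \<le> norm z" "norm z < 1"
  shows "norm (Kf W a p q t z) \<le> 4 * (Cst a p q)\<^sup>2 * (\<Sum>i\<in>UNIV. \<Sum>j\<in>UNIV. norm (W t$i$j))"
proof -
  let ?C = "Cst a p q" and ?S = "\<Sum>i\<in>UNIV. \<Sum>j\<in>UNIV. norm (W t$i$j)"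
  have tz: "t \<noteq> z" using t z by auto
  have "norm (qf (W t) (lpoly a p q z) - qf (W t) (lpoly a p q t)) \<le> 2*?C*?C*norm (z-t)*?S"
    by (rule qf_diff_bound) (use t z in \<open>auto intro: lpoly_bound lpoly_lip\<close>)
  moreover have "norm (t+z) \<le> 2" using t z norm_triangle_ineq[of t z] by simp
  moreover have "0 \<le> ?S" by (intro sum_nonneg) auto
  ultimately have "norm (t+z) * norm (qf (W t) (lpoly a p q z) - qf (W t) (lpoly a p q t)) \<le> 2 * (2*?C*?C*norm (z-t)*?S)"
    by (intro mult_mono) auto
  then have "norm (Kf W a p q t z) * norm (t - z) \<le> 4 * ?C\<^sup>2 * ?S * norm (t - z)"
    using tz by (simp add: Kf_def norm_mult norm_divide power2_eq_square norm_minus_commute mult_ac)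
  then show ?thesis using tz by simp
qed



lemma mm_facts:
  assumes "matrix_measure M W"
  shows "finite_measure M" "space M = sphere 0 1" "(\<lambda>t. t) \<in> borel_measurable M"
    "\<And>i j. integrable M (\<lambda>t. W t $ i $ j)" "\<And>i j. (\<lambda>t. W t $ i $ j) \<in> borel_measurable M"
    "\<And>t. t \<in> space M \<Longrightarrow> psd_matrix (W t)"
  using assms unfolding matrix_measure_def by (auto intro: meas_ident_M borel_measurable_integrable)

lemma meas_qf_W[measurable (raw)]:
  assumes "\<And>i j. (\<lambda>t. W t $ i $ j) \<in> borel_measurable M"
    and "\<And>i. (\<lambda>t. v t $ i) \<in> borel_measurable M"
  shows "(\<lambda>t. qf (W t) (v t)) \<in> borel_measurable M"
  unfolding qf_def by (intro borel_measurable_sum borel_measurable_times meas_cnj assms)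

lemma qf_real: "psd_matrix A \<Longrightarrow> complex_of_real (Re (qf A v)) = qf A v"
  unfolding psd_matrix_def by (simp add: complex_eq_iff)

lemma Cst_nonneg: "0 \<le> Cst a p q"
  unfolding Cst_def by (intro sum_nonneg mult_nonneg_nonneg) auto

lemma integrable_bdd_mult:
  fixes g h :: "'a \<Rightarrow> complex"
  assumes "integrable M g" "h \<in> borel_measurable M" "\<And>x. x \<in> space M \<Longrightarrow> norm (h x) \<le> c"
  shows "integrable M (\<lambda>x. h x * g x)"
proof (rule Bochner_Integration.integrable_bound[where f="\<lambda>x. c * norm (g x)"])
  show "integrable M (\<lambda>x. c * norm (g x))" using assms(1) by auto
  show "(\<lambda>x. h x * g x) \<in> borel_measurable M" by (intro borel_measurable_times assms(2) borel_measurable_integrable assms(1))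
  show "AE x in M. norm (h x * g x) \<le> norm (c * norm (g x))"
  proof (intro AE_I2)
    fix x assume "x \<in> space M"
    then have "norm (h x) * norm (g x) \<le> c * norm (g x)" by (intro mult_right_mono assms(3)) auto
    then show "norm (h x * g x) \<le> norm (c * norm (g x))" by (simp add: norm_mult)
  qed
qed

lemma rep:
  fixes M :: "complex measure" and W :: "complex \<Rightarrow> complex^'d::finite^'d"
  assumes mm: "matrix_measure M W" and z: "norm z < 1"
  shows "qf (cara_mat M W z) (lpoly a p q z) =
     cara (density M (\<lambda>t. ennreal (Re (qf (W t) (lpoly a p q t))))) z + (LINT t|M. Kf W a p q t z)"
proof -
  note mf = mm_facts[OF mm]
  note [measurable] = mf(3) mf(5)
  define B where "B = (1 + norm z)/(1 - norm z)"
  have B0: "0 \<le> B" using z by (simp add: B_def)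
  have kb: "norm ((t+z)/(t-z)) \<le> B" if "t \<in> space M" for t
  proof -
    have t1: "norm t = 1" using that mf(2) by simp
    have "norm (t+z) \<le> 1 + norm z" using norm_triangle_ineq[of t z] t1 by simp
    moreover have "1 - norm z \<le> norm (t - z)" using norm_triangle_ineq2[of t z] t1 by simp
    ultimately show ?thesis unfolding B_def norm_divide using z
      by (intro frac_le) auto
  qed
  have intkW: "integrable M (\<lambda>t. (t+z)/(t-z) * W t$i$j)" for i j
  proof (rule Bochner_Integration.integrable_bound[of M "\<lambda>t. of_real B * W t$i$j"])
    show "integrable M (\<lambda>t. of_real B * W t$i$j)" using mf(4) by auto
    show "(\<lambda>t. (t+z)/(t-z) * W t$i$j) \<in> borel_measurable M" by measurable
    show "AE t in M. norm ((t+z)/(t-z) * W t$i$j) \<le> norm (of_real B * W t$i$j)"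
    proof (intro AE_I2)
      fix t assume "t \<in> space M"
      then have "norm ((t+z)/(t-z)) * norm (W t$i$j) \<le> B * norm (W t$i$j)"
        by (intro mult_right_mono kb) auto
      then show "norm ((t+z)/(t-z) * W t$i$j) \<le> norm (of_real B * W t$i$j)"
        using B0 by (simp only: norm_mult norm_of_real abs_of_nonneg)
    qed
  qed
  have keq: "(t+z)/(t-z) * qf (W t) v = (\<Sum>i\<in>UNIV. \<Sum>j\<in>UNIV. v$i * ((t+z)/(t-z) * W t$i$j) * cnj (v$j))" for t v
    by (simp add: qf_def sum_distrib_left mult_ac)
  have termint: "integrable M (\<lambda>t. v$i * ((t+z)/(t-z) * W t$i$j) * cnj (v$j))" for v i j
    by (rule integrable_mult_left, rule integrable_mult_right, rule intkW)
  have intkQ: "integrable M (\<lambda>t. (t+z)/(t-z) * qf (W t) v)" for v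
    unfolding keq by (intro Bochner_Integration.integrable_sum termint)
  have termint2: "integrable M (\<lambda>t. lpoly a p q t $i * ((t+z)/(t-z) * W t$i$j) * cnj (lpoly a p q t $j))" for i j
  proof -
    have "integrable M (\<lambda>t. (lpoly a p q t $i * cnj (lpoly a p q t $j)) * ((t+z)/(t-z) * W t$i$j))"
    proof (rule integrable_bdd_mult[OF intkW])
      show "(\<lambda>t. lpoly a p q t $i * cnj (lpoly a p q t $j)) \<in> borel_measurable M" by measurable
      fix t assume "t \<in> space M"
      then have t1: "norm t = 1" using mf(2) by simp
      show "norm (lpoly a p q t $i * cnj (lpoly a p q t $j)) \<le> Cst a p q * Cst a p q"
        unfolding norm_mult complex_mod_cnj using t1
        by (intro mult_mono lpoly_bound) (auto simp: Cst_nonneg)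
    qed
    then show ?thesis by (simp add: mult_ac)
  qed
  have intkQ2: "integrable M (\<lambda>t. (t+z)/(t-z) * qf (W t) (lpoly a p q t))"
    unfolding keq by (intro Bochner_Integration.integrable_sum termint2)
  have G2: "qf (cara_mat M W z) v = (LINT t|M. (t+z)/(t-z) * qf (W t) v)" for v
  proof -
    have "(LINT t|M. (t+z)/(t-z) * qf (W t) v) = (\<Sum>i\<in>UNIV. \<Sum>j\<in>UNIV. LINT t|M. v$i * ((t+z)/(t-z) * W t$i$j) * cnj (v$j))"
      unfolding keq
      by (subst Bochner_Integration.integral_sum, intro Bochner_Integration.integrable_sum termint)
         (intro sum.cong refl Bochner_Integration.integral_sum termint)
    also have "\<dots> = qf (cara_mat M W z) v"
      by (simp only: integral_mult_left_zero integral_mult_right_zero) (simp add: qf_def cara_mat_def)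
    finally show ?thesis by simp
  qed
  have G1: "cara (density M (\<lambda>t. ennreal (Re (qf (W t) (lpoly a p q t))))) z
      = (LINT t|M. (t+z)/(t-z) * qf (W t) (lpoly a p q t))"
  proof -
    have "cara (density M (\<lambda>t. ennreal (Re (qf (W t) (lpoly a p q t))))) z
      = (LINT t|M. Re (qf (W t) (lpoly a p q t)) *\<^sub>R ((t+z)/(t-z)))"
      unfolding cara_def
    proof (rule integral_density)
      show "(\<lambda>t. (t+z)/(t-z)) \<in> borel_measurable M" by measurable
      show "(\<lambda>t. Re (qf (W t) (lpoly a p q t))) \<in> borel_measurable M" by measurable
      show "AE t in M. 0 \<le> Re (qf (W t) (lpoly a p q t))"
        using mf(6) by (intro AE_I2) (simp add: psd_matrix_def)
    qed
    also have "\<dots> = (LINT t|M. (t+z)/(t-z) * qf (W t) (lpoly a p q t))"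
      using mf(6) by (intro Bochner_Integration.integral_cong refl) (simp add: scaleR_conv_of_real qf_real)
    finally show ?thesis .
  qed
  have "(LINT t|M. Kf W a p q t z) = (LINT t|M. (t+z)/(t-z) * qf (W t) (lpoly a p q z) - (t+z)/(t-z) * qf (W t) (lpoly a p q t))"
    unfolding Kf_def by (simp add: right_diff_distrib)
  also have "\<dots> = qf (cara_mat M W z) (lpoly a p q z) - cara (density M (\<lambda>t. ennreal (Re (qf (W t) (lpoly a p q t))))) z"
    using intkQ intkQ2 by (simp add: G1 G2)
  finally show ?thesis by simp
qed




lemma key_id:
  fixes r :: real and t x v y u w :: complex
  assumes t0: "t \<noteq> 0" and r1: "r \<noteq> 1"
  shows "(t + of_real r * t) / (t - of_real r * t) * (w * ((x - v) * cnj y + v * cnj (y - u)))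
     = (t + of_real r * t) * (w * (- ((x - v) / (of_real r * t - t)) * cnj y - v * cnj ((y - u) / (of_real r * t - t)) * (cnj t / t)))"
proof -
  define s where "s = (of_real r :: complex)"
  define \<alpha> where "\<alpha> = t - s * t"
  have s1: "s \<noteq> 1" using r1 unfolding s_def
    by (metis of_real_1 of_real_eq_iff)
  have cs: "cnj s = s" unfolding s_def by simp
  have a0: "\<alpha> \<noteq> 0" unfolding \<alpha>_def using t0 s1 by auto
  have b: "s * t - t = - \<alpha>" unfolding \<alpha>_def by simp
  have ct: "cnj t \<noteq> 0" using t0 by simp
  have e1: "- ((x - v) / (s * t - t)) = (x - v) / \<alpha>" unfolding b by simp
  have cb: "cnj (s * t - t) = (s - 1) * cnj t" using cs by (simp add: algebra_simps)
  have "cnj ((y - u) / (s * t - t)) * (cnj t / t) = cnj (y - u) / ((s - 1) * cnj t) * (cnj t / t)"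
    by (simp only: complex_cnj_divide cb)
  also have "\<dots> = cnj (y - u) / ((s - 1) * t)"
  proof -
    have s1': "s - 1 \<noteq> 0" using s1 by simp
    show ?thesis using ct t0 s1' by (simp add: field_simps)
  qed
  also have "(s - 1) * t = - \<alpha>" unfolding \<alpha>_def by (simp add: algebra_simps)
  finally have e2: "cnj ((y - u) / (s * t - t)) * (cnj t / t) = - (cnj (y - u) / \<alpha>)" by simp
  have "(t + s * t) * (w * (- ((x - v) / (s * t - t)) * cnj y - v * cnj ((y - u) / (s * t - t)) * (cnj t / t)))
     = (t + s * t) * (w * ((x - v) / \<alpha> * cnj y + v * (cnj (y - u) / \<alpha>)))"
    by (simp only: e1 mult.assoc e2) simp
  also have "\<dots> = (t + s * t) / \<alpha> * (w * ((x - v) * cnj y + v * cnj (y - u)))"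
    using a0 by (simp add: field_simps)
  finally show ?thesis unfolding s_def \<alpha>_def by simp
qed

lemma lpoly_deriv:
  assumes "t \<noteq> 0"
  shows "((\<lambda>z. lpoly a p q z $ i) has_field_derivative
     (\<Sum>k\<in>{p..q}. of_int k * t powi (k - 1) * 1 * a k $ i)) (at t)"
  unfolding lpoly_comp using assms
  by (intro DERIV_sum DERIV_cmult_right DERIV_power_int DERIV_ident) auto

lemma lpoly_cont: "z \<noteq> 0 \<Longrightarrow> isCont (\<lambda>z. lpoly a p q z $ i) z"
  unfolding lpoly_comp by (intro continuous_intros) auto

lemma to_at_left: "((\<lambda>r. of_real r * c) \<longlongrightarrow> (c::complex)) (at_left 1)"
proof -
  have "((\<lambda>r. of_real r :: complex) \<longlongrightarrow> of_real 1) (at_left 1)"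
    by (intro tendsto_of_real tendsto_ident_at)
  then have "((\<lambda>r. of_real r * c) \<longlongrightarrow> of_real 1 * c) (at_left 1)"
    by (rule tendsto_mult_right)
  then show ?thesis by simp
qed


lemma Kf_lim:
  fixes W :: "complex \<Rightarrow> complex^'d::finite^'d"
  assumes t1: "norm t = 1"
  shows "\<exists>l. ((\<lambda>r. Kf W a p q t (of_real r * cis \<theta>)) \<longlongrightarrow> l) (at_left 1)"
proof (cases "t = cis \<theta>")
  case False
  have "isCont (\<lambda>z. Kf W a p q t z) (cis \<theta>)"
    unfolding Kf_def qf_def using False
    by (intro continuous_intros lpoly_cont) auto
  then have "((\<lambda>r. Kf W a p q t (of_real r * cis \<theta>)) \<longlongrightarrow> Kf W a p q t (cis \<theta>)) (at_left 1)"
    using isCont_tendsto_compose[OF _ to_at_left] by blast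
  then show ?thesis by blast
next
  case True
  have t0: "t \<noteq> 0" using t1 by auto
  define F where "F i z = lpoly a p q z $ i" for i z
  define d where "d i = (\<Sum>k\<in>{p..q}. of_int k * t powi (k - 1) * 1 * a k $ i)" for i
  define DQ where "DQ i r = (F i (of_real r * t) - F i t) / (of_real r * t - t)" for i r
  have DQl: "((\<lambda>r. DQ i r) \<longlongrightarrow> d i) (at_left 1)" for i
  proof -
    have "((\<lambda>z. (F i z - F i t) / (z - t)) \<longlongrightarrow> d i) (at t)"
      using lpoly_deriv[OF t0, of a p q i] unfolding has_field_derivative_iff F_def d_def by simp
    moreover have "filterlim (\<lambda>r. of_real r * t) (at t) (at_left (1::real))"
      unfolding filterlim_at
    proof
      show "\<forall>\<^sub>F r in at_left 1. of_real r * t \<in> UNIV \<and> of_real r * t \<noteq> t"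
        using eventually_at_left_real[OF zero_less_one] 
        by (rule eventually_mono) (use t0 in auto)
      show "((\<lambda>r. of_real r * t) \<longlongrightarrow> t) (at_left 1)" by (rule to_at_left)
    qed
    ultimately show ?thesis unfolding DQ_def by (rule filterlim_compose)
  qed
  have Fl: "((\<lambda>r. F i (of_real r * t)) \<longlongrightarrow> F i t) (at_left 1)" for i
    unfolding F_def using isCont_tendsto_compose[OF lpoly_cont[OF t0] to_at_left] by blast
  define RHS where "RHS r = (\<Sum>i\<in>UNIV. \<Sum>j\<in>UNIV. (t + of_real r*t) * (W t$i$j*(-(DQ i r) * cnj (F j (of_real r * t)) - F i t * cnj (DQ j r) * (cnj t / t))))" for r
  have "(RHS \<longlongrightarrow> (\<Sum>i\<in>UNIV. \<Sum>j\<in>UNIV. (t + of_real 1*t) * (W t$i$j*(-(d i) * cnj (F j t) - F i t * cnj (d j) * (cnj t / t))))) (at_left 1)"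
    unfolding RHS_def by (intro tendsto_intros DQl Fl)
  moreover have "\<forall>\<^sub>F r in at_left 1. RHS r = Kf W a p q t (of_real r * cis \<theta>)"
    using eventually_at_left_real[OF zero_less_one]
  proof (rule eventually_mono)
    fix r :: real assume "r \<in> {0<..<1}"
    then have r1: "r \<noteq> 1" by auto
    have "Kf W a p q t (of_real r * t) = (\<Sum>i\<in>UNIV. \<Sum>j\<in>UNIV. (t + of_real r*t)/(t - of_real r*t) *
        (W t$i$j * ((F i (of_real r * t) - F i t) * cnj (F j (of_real r * t)) + F i t * cnj (F j (of_real r * t) - F j t))))"
      unfolding Kf_def qf_def F_def sum_subtractf[symmetric] sum_distrib_left
      by (intro sum.cong refl) (simp add: qf_term_eq)
    also have "\<dots> = RHS r"
      unfolding RHS_def DQ_def using t0 r1 by (intro sum.cong refl key_id)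
    finally have "Kf W a p q t (of_real r * t) = RHS r" .
    then show "RHS r = Kf W a p q t (of_real r * cis \<theta>)" by (simp only: True)
  qed
  ultimately show ?thesis by (blast intro: Lim_transform_eventually)
qed





lemma meas_Kf2:
  fixes W :: "complex \<Rightarrow> complex^'d::finite^'d"
  assumes h: "h \<in> borel_measurable N"
    and Wm: "\<And>i j. (\<lambda>x. W (h x) $ i $ j) \<in> borel_measurable N"
    and g: "g \<in> borel_measurable N"
  shows "(\<lambda>x. Kf W a p q (h x) (g x)) \<in> borel_measurable N"
proof -
  have 1: "(\<lambda>x. qf (W (h x)) (lpoly a p q (g x))) \<in> borel_measurable N"
    by (rule meas_qf_W[OF Wm meas_lpoly[OF g]])
  have 2: "(\<lambda>x. qf (W (h x)) (lpoly a p q (h x))) \<in> borel_measurable N"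
    by (rule meas_qf_W[OF Wm meas_lpoly[OF h]])
  show ?thesis unfolding Kf_def
    by (intro borel_measurable_times borel_measurable_divide borel_measurable_add borel_measurable_diff h g 1 2)
qed

lemma filterlim_seq_left:
  fixes S :: "nat \<Rightarrow> real"
  assumes "\<And>n. S n < 1" "S \<longlonglongrightarrow> 1"
  shows "filterlim S (at_left 1) sequentially"
  using assms by (intro tendsto_imp_filterlim_at_left) auto

lemma D_lim:
  fixes M :: "complex measure" and W :: "complex \<Rightarrow> complex^'d::finite^'d"
    and a :: "int \<Rightarrow> complex^'d" and p q :: int
  assumes mm: "matrix_measure M W"
  defines "w \<equiv> \<lambda>t. 4 * (Cst a p q)\<^sup>2 * (\<Sum>i\<in>UNIV. \<Sum>j\<in>UNIV. norm (W t$i$j))"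
  shows "((\<lambda>r. LINT t|M. Kf W a p q t (of_real r * cis \<theta>)) \<longlongrightarrow>
          (LINT t|M. Lim (at_left 1) (\<lambda>r. Kf W a p q t (of_real r * cis \<theta>)))) (at_left 1)"
    and "\<And>r. 1/2 \<le> r \<Longrightarrow> r < 1 \<Longrightarrow> norm (LINT t|M. Kf W a p q t (of_real r * cis \<theta>)) \<le> integral\<^sup>L M w"
proof -
  note mf = mm_facts[OF mm]
  note [measurable] = mf(3) mf(5)
  have wi: "integrable M w" unfolding w_def using mf(4)
    by (intro integrable_mult_right Bochner_Integration.integrable_sum integrable_norm) auto
  have Km: "(\<lambda>t. Kf W a p q t z) \<in> borel_measurable M" for z
    by (rule meas_Kf2[where h="\<lambda>t. t"]) (auto simp: mf(5))
  have Kb: "norm (Kf W a p q t (of_real r * cis \<theta>)) \<le> w t" if "t \<in> space M" "1/2 \<le> r" "r < 1" for t r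
    unfolding w_def using that mf(2) by (intro Kf_bound) (auto simp: norm_mult)
  have Ki: "integrable M (\<lambda>t. Kf W a p q t (of_real r * cis \<theta>))" if "1/2 \<le> r" "r < 1" for r
  proof (rule Bochner_Integration.integrable_bound[OF wi Km])
    show "AE t in M. norm (Kf W a p q t (of_real r * cis \<theta>)) \<le> norm (w t)"
    proof (intro AE_I2)
      fix t assume "t \<in> space M"
      then have "norm (Kf W a p q t (of_real r * cis \<theta>)) \<le> w t" using Kb that by blast
      then show "norm (Kf W a p q t (of_real r * cis \<theta>)) \<le> norm (w t)"
        unfolding real_norm_def using abs_ge_self order_trans by blast
    qed
  qed
  show "norm (LINT t|M. Kf W a p q t (of_real r * cis \<theta>)) \<le> integral\<^sup>L M w" if "1/2 \<le> r" "r < 1" for r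
    by (rule Bochner_Integration.integral_norm_bound_integral[OF Ki[OF that] wi Kb]) (use that in auto)
  have Klim: "((\<lambda>r. Kf W a p q t (of_real r * cis \<theta>)) \<longlongrightarrow> Lim (at_left 1) (\<lambda>r. Kf W a p q t (of_real r * cis \<theta>))) (at_left 1)"
    if "t \<in> space M" for t
  proof -
    have "norm t = 1" using that mf(2) by simp
    from Kf_lim[OF this] obtain l where l: "((\<lambda>r. Kf W a p q t (of_real r * cis \<theta>)) \<longlongrightarrow> l) (at_left 1)" by blast
    then have "Lim (at_left 1) (\<lambda>r. Kf W a p q t (of_real r * cis \<theta>)) = l"
      by (intro tendsto_Lim) simp
    then show ?thesis using l by simp
  qed
  show "((\<lambda>r. LINT t|M. Kf W a p q t (of_real r * cis \<theta>)) \<longlongrightarrow>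
          (LINT t|M. Lim (at_left 1) (\<lambda>r. Kf W a p q t (of_real r * cis \<theta>)))) (at_left 1)"
  proof (rule tendsto_at_left_sequentially[of "1/2"])
    fix S :: "nat \<Rightarrow> real" assume S1: "\<And>n. S n < 1" and S2: "\<And>n. 1/2 < S n" and "incseq S" and S3: "S \<longlonglongrightarrow> 1"
    have fS: "filterlim S (at_left 1) sequentially" using S1 S3 by (rule filterlim_seq_left)
    have pl: "(\<lambda>n. Kf W a p q t (of_real (S n) * cis \<theta>)) \<longlonglongrightarrow> Lim (at_left 1) (\<lambda>r. Kf W a p q t (of_real r * cis \<theta>))"
      if "t \<in> space M" for t
      using filterlim_compose[OF Klim[OF that] fS] by simp
    show "(\<lambda>n. LINT t|M. Kf W a p q t (of_real (S n) * cis \<theta>)) \<longlonglongrightarrow> (LINT t|M. Lim (at_left 1) (\<lambda>r. Kf W a p q t (of_real r * cis \<theta>)))"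
    proof (rule integral_dominated_convergence[where w=w])
      show "(\<lambda>t. Lim (at_left 1) (\<lambda>r. Kf W a p q t (of_real r * cis \<theta>))) \<in> borel_measurable M"
        by (rule borel_measurable_LIMSEQ_metric[OF Km pl])
      show "\<And>n. (\<lambda>t. Kf W a p q t (of_real (S n) * cis \<theta>)) \<in> borel_measurable M" by (rule Km)
      show "integrable M w" by (rule wi)
      show "AE t in M. (\<lambda>n. Kf W a p q t (of_real (S n) * cis \<theta>)) \<longlonglongrightarrow> Lim (at_left 1) (\<lambda>r. Kf W a p q t (of_real r * cis \<theta>))"
        using pl by (rule AE_I2)
      show "AE t in M. norm (Kf W a p q t (of_real (S n) * cis \<theta>)) \<le> w t" for n
        using Kb S1 S2 by (intro AE_I2) (meson less_imp_le)
    qed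
  qed simp
qed


theorem proposition4:
  fixes M :: "complex measure" and W :: "complex \<Rightarrow> complex^'d::finite^'d"
    and a :: "int \<Rightarrow> complex^'d" and p q :: int
  assumes "pd_matrix_measure M W" and "p \<le> q"
  shows "L2_T (cara (density M (\<lambda>t. ennreal (Re (qf (W t) (lpoly a p q t))))))
         \<longleftrightarrow> L2_T (\<lambda>z. qf (cara_mat M W z) (lpoly a p q z))"
proof -
  have mm: "matrix_measure M W" using assms(1) unfolding pd_matrix_measure_def by blast
  note mf = mm_facts[OF mm]
  define G1 where "G1 = cara (density M (\<lambda>t. ennreal (Re (qf (W t) (lpoly a p q t)))))"
  define G2 where "G2 = (\<lambda>z. qf (cara_mat M W z) (lpoly a p q z))"
  define D where "D z = (LINT t|M. Kf W a p q t z)" for z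
  define E where "E \<theta> = (LINT t|M. Lim (at_left 1) (\<lambda>r. Kf W a p q t (of_real r * cis \<theta>)))" for \<theta>
  define w where "w = (\<lambda>t. 4 * (Cst a p q)\<^sup>2 * (\<Sum>i\<in>UNIV. \<Sum>j\<in>UNIV. norm (W t$i$j)))"
  have rep': "G2 z = G1 z + D z" if "norm z < 1" for z
    using rep[OF mm that] unfolding G1_def G2_def D_def by simp
  have lim: "((\<lambda>r. D (of_real r * cis \<theta>)) \<longlongrightarrow> E \<theta>) (at_left 1)" for \<theta>
    unfolding D_def E_def by (rule D_lim(1)[OF mm])
  have Eb: "norm (E \<theta>) \<le> integral\<^sup>L M w" for \<theta>
  proof (rule tendsto_upperbound[OF tendsto_norm[OF lim]])
    show "\<forall>\<^sub>F r in at_left 1. norm (D (of_real r * cis \<theta>)) \<le> integral\<^sup>L M w"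
    proof -
      have ev: "\<forall>\<^sub>F x in at_left (1::real). x \<in> {1/2<..<1}" by (rule eventually_at_left_real) simp
      then show ?thesis
      proof (rule eventually_mono)
        fix r :: real assume "r \<in> {1/2<..<1}"
        then show "norm (D (of_real r * cis \<theta>)) \<le> integral\<^sup>L M w"
          unfolding D_def w_def by (intro D_lim(2)[OF mm]) auto
      qed
    qed
  qed simp
  have Em: "E \<in> borel_measurable lborel"
  proof -
    interpret finite_measure M by (rule mf(1))
    define S where "S n = 1 - 1 / real (Suc (Suc n))" for n
    have S1: "S n < 1" for n unfolding S_def by simp
    have "(\<lambda>n. 1 / real (Suc (Suc n))) \<longlonglongrightarrow> 0"
      using LIMSEQ_ignore_initial_segment[OF lim_inverse_n', of 2] by (simp add: add.commute)
    then have S2: "S \<longlonglongrightarrow> 1" unfolding S_def using tendsto_diff[OF tendsto_const, of _ 0 sequentially 1] by simp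
    have fS: "filterlim S (at_left 1) sequentially" using S1 S2 by (rule filterlim_seq_left)
    have Sm: "(\<lambda>\<theta>. D (of_real (S n) * cis \<theta>)) \<in> borel_measurable lborel" for n
      unfolding D_def
    proof (rule borel_measurable_lebesgue_integral)
      have "(\<lambda>x. Kf W a p q (snd x) (of_real (S n) * cis (fst x))) \<in> borel_measurable (lborel \<Otimes>\<^sub>M M)"
      proof (rule meas_Kf2)
        show "snd \<in> borel_measurable (lborel \<Otimes>\<^sub>M M)"
        proof -
          have "(\<lambda>x. (\<lambda>t. t) (snd x)) \<in> borel_measurable (lborel \<Otimes>\<^sub>M M)"
            by (rule measurable_compose[OF measurable_snd mf(3)])
          then show ?thesis by simp
        qed
        show "(\<lambda>x. W (snd x) $ i $ j) \<in> borel_measurable (lborel \<Otimes>\<^sub>M M)" for i j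
          by (rule measurable_compose[OF measurable_snd mf(5)])
        show "(\<lambda>x. complex_of_real (S n) * cis (fst x)) \<in> borel_measurable (lborel \<Otimes>\<^sub>M M)"
          by measurable
      qed
      then show "(\<lambda>(\<theta>, t). Kf W a p q t (of_real (S n) * cis \<theta>)) \<in> borel_measurable (lborel \<Otimes>\<^sub>M M)"
        by (simp add: split_beta')
    qed
    show ?thesis
      by (rule borel_measurable_LIMSEQ_metric[OF Sm]) (rule filterlim_compose[OF lim fS])
  qed
  show ?thesis
  proof
    assume "L2_T (cara (density M (\<lambda>t. ennreal (Re (qf (W t) (lpoly a p q t))))))"
    then have "L2_T G1" unfolding G1_def .
    then have "L2_T G2"
      by (intro L2_transfer[of G2 G1 D E "integral\<^sup>L M w"] rep' lim Em Eb)
    then show "L2_T (\<lambda>z. qf (cara_mat M W z) (lpoly a p q z))" unfolding G2_def .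
  next
    assume "L2_T (\<lambda>z. qf (cara_mat M W z) (lpoly a p q z))"
    then have "L2_T G2" unfolding G2_def .
    have rep'': "G1 z = G2 z + (- D z)" if "norm z < 1" for z using rep'[OF that] by simp
    have lim': "((\<lambda>r. - D (of_real r * cis \<theta>)) \<longlongrightarrow> - E \<theta>) (at_left 1)" for \<theta>
      by (intro tendsto_minus lim)
    have Em': "(\<lambda>\<theta>. - E \<theta>) \<in> borel_measurable lborel" using Em by measurable
    have Eb': "norm (- E \<theta>) \<le> integral\<^sup>L M w" for \<theta> using Eb[of \<theta>] by simp
    have "L2_T G1"
      by (intro L2_transfer[of G1 G2 "\<lambda>z. - D z" "\<lambda>\<theta>. - E \<theta>" "integral\<^sup>L M w"] rep'' lim' Em' Eb' \<open>L2_T G2\<close>)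
    then show "L2_T (cara (density M (\<lambda>t. ennreal (Re (qf (W t) (lpoly a p q t))))))" unfolding G1_def .
  qed
qed


end
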